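(* Let $\boldsymbol{d}$ be a graphical degree sequence with minimum degree at least $3$. Let $(G,H)$ be a switch on $\mathcal{G}(n,\boldsymbol{d})$ which removes the edges $a_1a_2,a_3a_4$ and inserts the edges $a_1a_3,a_2a_4$, and let $D=\{a_1,a_2,a_3,a_4\}$. Suppose that all of the following hold: neither of the diagonals $a_1a_4$, $a_2a_3$ is an edge of $G$; no pair of vertices in $D$ has a common neighbour in $G$; and there is no triangle in $G$ on vertices $a_j,u,w$ with $j\in[4]$ and $\{u,w\}\cap D=\emptyset$. Then there is a triangle-switch simulation path of length at most $5$ from $G$ to $H$.
   Context: $\mathcal{G}(n,\boldsymbol{d})$ is the set of labelled simple graphs on $[n]$ with vertex $i$ of degree $d_i$. A switch $(G,H)$ on $\mathcal{G}(n,\boldsymbol{d})$: $G\in\mathcal{G}(n,\boldsymbol{d})$, $F$ is a set of two vertex-disjoint edges of $G$ on vertex set $\{a_1,a_2,a_3,a_4\}$, $F'$ is a different perfect matching of these four vertices with $F'\cap(E(G)\setminus F)=\emptyset$, and $H$ has edge set $(E(G)\setminus F)\cup F'$. A triangle switch is a switch $(G,H)$ such that for some pair $aa'\in F\cup F'$, $a$ and $a'$ have a common neighbour in $G$ outside $\{a_1,a_2,a_3,a_4\}$. A triangle-switch simulation path of length $\kappa$ from $G$ to $H$ is a sequence $G=X_0,X_1,\dots,X_\kappa=H$ of graphs in $\mathcal{G}(n,\boldsymbol{d})$ such that each $(X_i,X_{i+1})$ is a triangle switch. *)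

theory Defs
  imports Main
begin

text \<open>Simple graphs on vertex set [n] = {1..n}, represented by their edge sets
 (a set of 2-element subsets of {1..n}).\<close>

type_synonym graph = "nat set set"

definition simple_graph_on :: "nat \<Rightarrow> graph \<Rightarrow> bool" where
  "simple_graph_on n E \<longleftrightarrow> (\<forall>e\<in>E. e \<subseteq> {1..n} \<and> card e = 2)"

definition degree :: "graph \<Rightarrow> nat \<Rightarrow> nat" where
  "degree E i = card {e \<in> E. i \<in> e}"

definition Gnd :: "nat \<Rightarrow> (nat \<Rightarrow> nat) \<Rightarrow> graph set" where
  "Gnd n d = {E. simple_graph_on n E \<and> (\<forall>i\<in>{1..n}. degree E i = d i)}"

definition graphical :: "nat \<Rightarrow> (nat \<Rightarrow> nat) \<Rightarrow> bool" where
  "graphical n d \<longleftrightarrow> Gnd n d \<noteq> {}"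

definition common_nbr_outside :: "graph \<Rightarrow> nat set \<Rightarrow> nat \<Rightarrow> nat \<Rightarrow> bool" where
  "common_nbr_outside E D a b \<longleftrightarrow> (\<exists>w. w \<notin> D \<and> {a,w} \<in> E \<and> {b,w} \<in> E)"

definition switch_with :: "nat \<Rightarrow> (nat \<Rightarrow> nat) \<Rightarrow> (nat set \<Rightarrow> nat set set \<Rightarrow> bool)
    \<Rightarrow> graph \<Rightarrow> graph \<Rightarrow> bool" where
  "switch_with n d P G H \<longleftrightarrow> G \<in> Gnd n d \<and>
     (\<exists>a1 a2 a3 a4 F F'. distinct [a1,a2,a3,a4] \<and> {a1,a2,a3,a4} \<subseteq> {1..n} \<and>
        F = {{a1,a2},{a3,a4}} \<and> F \<subseteq> G \<and>
        F' \<in> {{{a1,a3},{a2,a4}}, {{a1,a4},{a2,a3}}} \<and>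
        F' \<inter> (G - F) = {} \<and>
        H = (G - F) \<union> F' \<and> P {a1,a2,a3,a4} (F \<union> F'))"

definition is_switch :: "nat \<Rightarrow> (nat \<Rightarrow> nat) \<Rightarrow> graph \<Rightarrow> graph \<Rightarrow> bool" where
  "is_switch n d G H \<longleftrightarrow> switch_with n d (\<lambda>D P. True) G H"

definition triangle_switch :: "nat \<Rightarrow> (nat \<Rightarrow> nat) \<Rightarrow> graph \<Rightarrow> graph \<Rightarrow> bool" where
  "triangle_switch n d G H \<longleftrightarrow>
     switch_with n d (\<lambda>D P. \<exists>a a'. {a,a'} \<in> P \<and> common_nbr_outside G D a a') G H"

definition tri_sim_path :: "nat \<Rightarrow> (nat \<Rightarrow> nat) \<Rightarrow> nat \<Rightarrow> graph \<Rightarrow> graph \<Rightarrow> bool" where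
  "tri_sim_path n d \<kappa> G H \<longleftrightarrow> (\<exists>X :: nat \<Rightarrow> graph. X 0 = G \<and> X \<kappa> = H \<and>
      (\<forall>i\<le>\<kappa>. X i \<in> Gnd n d) \<and> (\<forall>i<\<kappa>. triangle_switch n d (X i) (X (Suc i))))"

end

theory Submission
  imports Defs
begin


definition sw :: "graph \<Rightarrow> nat \<Rightarrow> nat \<Rightarrow> nat \<Rightarrow> nat \<Rightarrow> graph" where
  "sw G b1 b2 b3 b4 = (G - {{b1,b2},{b3,b4}}) \<union> {{b1,b3},{b2,b4}}"

lemma mem_sw: "e \<in> sw G b1 b2 b3 b4 \<longleftrightarrow> (e = {b1,b3} \<or> e = {b2,b4} \<or> (e \<in> G \<and> e \<noteq> {b1,b2} \<and> e \<noteq> {b3,b4}))"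
  unfolding sw_def by blast

lemma Gnd_edge:
  assumes "G \<in> Gnd n d" "{u,v} \<in> G"
  shows "u \<noteq> v \<and> u \<in> {1..n} \<and> v \<in> {1..n}"
proof -
  have "{u,v} \<subseteq> {1..n} \<and> card {u,v} = 2"
    using assms unfolding Gnd_def simple_graph_on_def by blast
  then show ?thesis by (cases "u = v") auto
qed

lemma Gnd_finite:
  assumes "G \<in> Gnd n d" shows "finite G"
proof -
  have "G \<subseteq> Pow {1..n}" using assms unfolding Gnd_def simple_graph_on_def by blast
  then show ?thesis using finite_subset by blast
qed

lemma card_swap1:
  assumes "finite S" "a \<in> S" "b \<notin> S"
  shows "card ((S - {a}) \<union> {b}) = card S"
proof -
  have "b \<notin> S - {a}" using assms by simp
  then have "card ((S - {a}) \<union> {b}) = Suc (card (S - {a}))"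
    using assms by simp
  moreover have "card (S - {a}) = card S - 1" using assms by (simp add: card_Diff_singleton)
  moreover have "card S > 0" using assms card_gt_0_iff by blast
  ultimately show ?thesis by simp
qed

lemma filt_sw: "{e \<in> (G - F) \<union> F'. i \<in> e} = ({e\<in>G. i\<in>e} - {e\<in>F. i\<in>e}) \<union> {e\<in>F'. i\<in>e}"
  by blast

lemma card_gen:
  assumes "finite S" "A \<subseteq> S" "B \<inter> S = {}" "card A = card B" "finite B"
  shows "card ((S - A) \<union> B) = card S"
proof -
  have fA: "finite A" using assms finite_subset by blast
  have "card ((S - A) \<union> B) = card (S - A) + card B"
    using assms by (intro card_Un_disjoint) auto
  moreover have "card (S - A) = card S - card A" using assms fA by (simp add: card_Diff_subset)
  moreover have "card A \<le> card S" using assms(1,2) by (rule card_mono)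
  ultimately show ?thesis using assms by simp
qed

lemma filt_count:
  assumes dist: "distinct [b1,b2,b3,b4]"
  shows "card {e\<in>{{b1,b2},{b3,b4}}. i\<in>e} = card {e\<in>{{b1,b3},{b2,b4}}. i\<in>e}"
proof -
  consider "i = b1" | "i = b2" | "i = b3" | "i = b4" | "i \<notin> {b1,b2,b3,b4}" by blast
  then show ?thesis
  proof cases
    case 1
    then have "{e\<in>{{b1,b2},{b3,b4}}. i\<in>e} = {{b1,b2}}" "{e\<in>{{b1,b3},{b2,b4}}. i\<in>e} = {{b1,b3}}"
      using dist by auto
    then show ?thesis by simp
  next
    case 2
    then have "{e\<in>{{b1,b2},{b3,b4}}. i\<in>e} = {{b1,b2}}" "{e\<in>{{b1,b3},{b2,b4}}. i\<in>e} = {{b2,b4}}"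
      using dist by auto
    then show ?thesis by simp
  next
    case 3
    then have "{e\<in>{{b1,b2},{b3,b4}}. i\<in>e} = {{b3,b4}}" "{e\<in>{{b1,b3},{b2,b4}}. i\<in>e} = {{b1,b3}}"
      using dist by auto
    then show ?thesis by simp
  next
    case 4
    then have "{e\<in>{{b1,b2},{b3,b4}}. i\<in>e} = {{b3,b4}}" "{e\<in>{{b1,b3},{b2,b4}}. i\<in>e} = {{b2,b4}}"
      using dist by auto
    then show ?thesis by simp
  next
    case 5
    then have h1: "{e\<in>{{b1,b2},{b3,b4}}. i\<in>e} = {}" and h2: "{e\<in>{{b1,b3},{b2,b4}}. i\<in>e} = {}"
      by auto
    show ?thesis by (simp only: h1 h2)
  qed
qed

lemma sw_Gnd:
  assumes G: "G \<in> Gnd n d" and dist: "distinct [b1,b2,b3,b4]" and V: "{b1,b2,b3,b4} \<subseteq> {1..n}"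
    and e1: "{b1,b2} \<in> G" and e2: "{b3,b4} \<in> G" and n1: "{b1,b3} \<notin> G" and n2: "{b2,b4} \<notin> G"
  shows "sw G b1 b2 b3 b4 \<in> Gnd n d"
proof -
  have fin: "finite G" using G Gnd_finite by blast
  have sgG: "\<forall>e\<in>G. e \<subseteq> {1..n} \<and> card e = 2" using G unfolding Gnd_def simple_graph_on_def by blast
  have c13: "{b1,b3} \<subseteq> {1..n} \<and> card {b1,b3} = 2" using V dist by simp
  have c24: "{b2,b4} \<subseteq> {1..n} \<and> card {b2,b4} = 2" using V dist by simp
  have sg: "simple_graph_on n (sw G b1 b2 b3 b4)"
    unfolding simple_graph_on_def sw_def
  proof
    fix e assume "e \<in> G - {{b1,b2},{b3,b4}} \<union> {{b1,b3},{b2,b4}}"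
    then consider "e \<in> G" | "e = {b1,b3}" | "e = {b2,b4}" by blast
    then show "e \<subseteq> {1..n} \<and> card e = 2" using sgG c13 c24 by cases auto
  qed
  have deg: "degree (sw G b1 b2 b3 b4) i = degree G i" for i
  proof -
    let ?S = "{e \<in> G. i \<in> e}"
    have "card ((?S - {e\<in>{{b1,b2},{b3,b4}}. i\<in>e}) \<union> {e\<in>{{b1,b3},{b2,b4}}. i\<in>e}) = card ?S"
    proof (rule card_gen)
      show "finite ?S" using fin by simp
      show "{e\<in>{{b1,b2},{b3,b4}}. i\<in>e} \<subseteq> ?S" using e1 e2 by blast
      show "{e\<in>{{b1,b3},{b2,b4}}. i\<in>e} \<inter> ?S = {}" using n1 n2 by blast
      show "card {e\<in>{{b1,b2},{b3,b4}}. i\<in>e} = card {e\<in>{{b1,b3},{b2,b4}}. i\<in>e}"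
        using filt_count[OF dist] .
      show "finite {e\<in>{{b1,b3},{b2,b4}}. i\<in>e}" by simp
    qed
    then show ?thesis unfolding degree_def sw_def filt_sw .
  qed
  show ?thesis using G sg deg unfolding Gnd_def by auto
qed

lemma tri_step:
  assumes G: "G \<in> Gnd n d" and dist: "distinct [b1,b2,b3,b4]" and V: "{b1,b2,b3,b4} \<subseteq> {1..n}"
    and e1: "{b1,b2} \<in> G" and e2: "{b3,b4} \<in> G" and n1: "{b1,b3} \<notin> G" and n2: "{b2,b4} \<notin> G"
    and h: "h \<notin> {b1,b2,b3,b4}" and hu: "{u,h} \<in> G" and hv: "{v,h} \<in> G"
    and uv: "{u,v} \<in> {{b1,b2},{b3,b4},{b1,b3},{b2,b4}}"
  shows "triangle_switch n d G (sw G b1 b2 b3 b4) \<and> sw G b1 b2 b3 b4 \<in> Gnd n d"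
proof
  show "sw G b1 b2 b3 b4 \<in> Gnd n d" using sw_Gnd[OF assms(1-7)] .
  have cn: "common_nbr_outside G {b1,b2,b3,b4} u v"
    unfolding common_nbr_outside_def using h hu hv by blast
  show "triangle_switch n d G (sw G b1 b2 b3 b4)"
    unfolding triangle_switch_def switch_with_def
  proof (intro conjI exI)
    show "G \<in> Gnd n d" by fact
    show "distinct [b1,b2,b3,b4]" by fact
    show "{b1,b2,b3,b4} \<subseteq> {1..n}" by fact
    show "{{b1,b2},{b3,b4}} = {{b1,b2},{b3,b4}}" by simp
    show "{{b1,b2},{b3,b4}} \<subseteq> G" using e1 e2 by simp
    show "{{b1,b3},{b2,b4}} \<in> {{{b1,b3},{b2,b4}}, {{b1,b4},{b2,b3}}}" by simp
    show "{{b1,b3},{b2,b4}} \<inter> (G - {{b1,b2},{b3,b4}}) = {}" using n1 n2 by auto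
    show "sw G b1 b2 b3 b4 = (G - {{b1,b2},{b3,b4}}) \<union> {{b1,b3},{b2,b4}}" by (simp add: sw_def)
    show "{u,v} \<in> {{b1,b2},{b3,b4}} \<union> {{b1,b3},{b2,b4}}" using uv by blast
    show "common_nbr_outside G {b1,b2,b3,b4} u v" by fact
  qed
qed

lemma path0: "G \<in> Gnd n d \<Longrightarrow> tri_sim_path n d 0 G G"
  unfolding tri_sim_path_def by (rule exI[of _ "\<lambda>_. G"]) simp

lemma path_cons:
  assumes s: "triangle_switch n d G G'" and p: "tri_sim_path n d k G' H"
  shows "tri_sim_path n d (Suc k) G H"
proof -
  have G: "G \<in> Gnd n d" using s unfolding triangle_switch_def switch_with_def by blast
  obtain X where X: "X 0 = G'" "X k = H" "\<forall>i\<le>k. X i \<in> Gnd n d"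
    "\<forall>i<k. triangle_switch n d (X i) (X (Suc i))"
    using p unfolding tri_sim_path_def by blast
  define Y where "Y i = (if i = 0 then G else X (i - 1))" for i
  have "Y 0 = G" by (simp add: Y_def)
  moreover have "Y (Suc k) = H" using X(2) by (simp add: Y_def)
  moreover have "\<forall>i\<le>Suc k. Y i \<in> Gnd n d"
  proof (intro allI impI)
    fix i assume i: "i \<le> Suc k"
    show "Y i \<in> Gnd n d"
    proof (cases i)
      case 0 then show ?thesis using G by (simp add: Y_def)
    next
      case (Suc j) then show ?thesis using X(3) i by (simp add: Y_def)
    qed
  qed
  moreover have "\<forall>i<Suc k. triangle_switch n d (Y i) (Y (Suc i))"
  proof (intro allI impI)
    fix i assume i: "i < Suc k"
    show "triangle_switch n d (Y i) (Y (Suc i))"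
    proof (cases i)
      case 0 then show ?thesis using s X(1) by (simp add: Y_def)
    next
      case (Suc j) then show ?thesis using X(4) i by (simp add: Y_def)
    qed
  qed
  ultimately show ?thesis unfolding tri_sim_path_def by blast
qed

lemma deg3_nbr:
  assumes G: "G \<in> Gnd n d" and v: "v \<in> {1..n}" and dv: "d v \<ge> 3"
  shows "\<exists>w. {v,w} \<in> G \<and> w \<noteq> b \<and> w \<noteq> c"
proof (rule ccontr)
  assume neg: "\<not> (\<exists>w. {v,w} \<in> G \<and> w \<noteq> b \<and> w \<noteq> c)"
  then have sub: "{e \<in> G. v \<in> e} \<subseteq> {{v,b},{v,c}}"
  proof -
    { fix e assume e: "e \<in> G" "v \<in> e"
      then have "e \<subseteq> {1..n}" "card e = 2" using G unfolding Gnd_def simple_graph_on_def by auto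
      then obtain x y where xy: "e = {x,y}" "x \<noteq> y" by (meson card_2_iff)
      then obtain w where w: "e = {v,w}" using e(2) by (auto simp: insert_commute)
      then have "w = b \<or> w = c" using e(1) neg by blast
      then have "e \<in> {{v,b},{v,c}}" using w by auto }
    then show ?thesis by blast
  qed
  have "card {e \<in> G. v \<in> e} \<le> card {{v,b},{v,c}}" by (rule card_mono) (simp_all add: sub)
  also have "\<dots> \<le> 2" by (simp add: card_insert_le_m1)
  finally have "degree G v \<le> 2" unfolding degree_def .
  moreover have "degree G v = d v" using G v unfolding Gnd_def by blast
  ultimately show False using dv by simp
qed



lemma P_gen:
  fixes G :: graph
  assumes G: "G \<in> Gnd n d"
    and dist: "distinct [a1,a2,a3,a4,x,p,y,z]"
    and V: "{a1,a2,a3,a4} \<subseteq> {1..n}"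
    and E: "{a1,a2} \<in> G" "{a3,a4} \<in> G" "{a1,x} \<in> G" "{a1,p} \<in> G" "{x,y} \<in> G" "{p,z} \<in> G"
    and N: "{a1,a3} \<notin> G" "{a2,a4} \<notin> G" "{x,p} \<notin> G" "{y,z} \<notin> G" "{a4,x} \<notin> G"
  shows "tri_sim_path n d 4 G ((G - {{a1,a2},{a3,a4}}) \<union> {{a1,a3},{a2,a4}})"
proof -
  have Ec: "{a2,a1} \<in> G" "{a4,a3} \<in> G" "{x,a1} \<in> G" "{p,a1} \<in> G" "{y,x} \<in> G" "{z,p} \<in> G"
    using E by (simp_all add: insert_commute)
  have Nc: "{a3,a1} \<notin> G" "{a4,a2} \<notin> G" "{p,x} \<notin> G" "{z,y} \<notin> G" "{x,a4} \<notin> G"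
    using N by (simp_all add: insert_commute)
  have Vx: "x \<in> {1..n}" "p \<in> {1..n}" "y \<in> {1..n}" "z \<in> {1..n}"
    using Gnd_edge[OF G E(3)] Gnd_edge[OF G E(4)] Gnd_edge[OF G E(5)] Gnd_edge[OF G E(6)] by auto
  define G1 where "G1 = sw G x y p z"
  have s1: "triangle_switch n d G G1 \<and> G1 \<in> Gnd n d"
    unfolding G1_def
    by (rule tri_step[where h=a1 and u=x and v=p])
       (use G dist V Vx E N Ec Nc in \<open>auto simp:  mem_sw doubleton_eq_iff\<close>)
  define G2 where "G2 = sw G1 a1 x a3 a4"
  have s2: "triangle_switch n d G1 G2 \<and> G2 \<in> Gnd n d"
    unfolding G2_def
    by (rule tri_step[where h=p and u=a1 and v=x])
       (use s1 dist V Vx E N Ec Nc in \<open>auto simp: G1_def mem_sw doubleton_eq_iff\<close>)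
  define G3 where "G3 = sw G2 a1 a2 x a4"
  have s3: "triangle_switch n d G2 G3 \<and> G3 \<in> Gnd n d"
    unfolding G3_def
    by (rule tri_step[where h=p and u=a1 and v=x])
       (use s2 dist V Vx E N Ec Nc in \<open>auto simp: G2_def G1_def mem_sw doubleton_eq_iff\<close>)
  define G4 where "G4 = sw G3 x p y z"
  have s4: "triangle_switch n d G3 G4 \<and> G4 \<in> Gnd n d"
    unfolding G4_def
    by (rule tri_step[where h=a1 and u=x and v=p])
       (use s3 dist V Vx E N Ec Nc in \<open>auto simp: G3_def G2_def G1_def mem_sw doubleton_eq_iff\<close>)
  have fin: "G4 = (G - {{a1,a2},{a3,a4}}) \<union> {{a1,a3},{a2,a4}}"
  proof (rule set_eqI)
    fix e
    show "e \<in> G4 \<longleftrightarrow> e \<in> (G - {{a1,a2},{a3,a4}}) \<union> {{a1,a3},{a2,a4}}"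
    proof (cases "e \<in> {{x,y},{y,x},{p,z},{z,p},{x,p},{p,x},{y,z},{z,y},{a1,x},{x,a1},{a3,a4},{a4,a3},{a1,a3},{a3,a1},{x,a4},{a4,x},{a1,a2},{a2,a1},{a2,a4},{a4,a2}}")
      case True
      then show ?thesis unfolding G4_def G3_def G2_def G1_def
        using dist E N Ec Nc by (elim insertE emptyE) (auto simp: mem_sw doubleton_eq_iff)
    next
      case False
      then show ?thesis unfolding G4_def G3_def G2_def G1_def by (simp add: mem_sw)
    qed
  qed
  show ?thesis
    using path_cons[OF conjunct1[OF s1] path_cons[OF conjunct1[OF s2] path_cons[OF conjunct1[OF s3] path_cons[OF conjunct1[OF s4] path0[OF conjunct2[OF s4]]]]]] fin
    by (simp add: numeral_eq_Suc)
qed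

lemma Q_a3:
  fixes G :: graph
  assumes G: "G \<in> Gnd n d"
    and dist: "distinct [a1,a2,a3,a4,p,z1,z2,y]"
    and V: "{a1,a2,a3,a4} \<subseteq> {1..n}"
    and E: "{a1,a2} \<in> G" "{a3,a4} \<in> G" "{a1,p} \<in> G" "{p,z1} \<in> G" "{p,z2} \<in> G" "{y,z1} \<in> G" "{y,z2} \<in> G"
    and N: "{a1,a3} \<notin> G" "{a2,a4} \<notin> G" "{a1,z1} \<notin> G" "{p,y} \<notin> G" "{a4,p} \<notin> G" "{a3,y} \<notin> G"
  shows "tri_sim_path n d 4 G ((G - {{a1,a2},{a3,a4}}) \<union> {{a1,a3},{a2,a4}})"
proof -
  have Ec: "{a2,a1} \<in> G" "{a4,a3} \<in> G" "{p,a1} \<in> G" "{z1,p} \<in> G" "{z2,p} \<in> G" "{z1,y} \<in> G" "{z2,y} \<in> G"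
    using E by (simp_all add: insert_commute)
  have Nc: "{a3,a1} \<notin> G" "{a4,a2} \<notin> G" "{z1,a1} \<notin> G" "{y,p} \<notin> G" "{p,a4} \<notin> G" "{y,a3} \<notin> G"
    using N by (simp_all add: insert_commute)
  have Vx: "p \<in> {1..n}" "z1 \<in> {1..n}" "z2 \<in> {1..n}" "y \<in> {1..n}"
    using Gnd_edge[OF G E(3)] Gnd_edge[OF G E(4)] Gnd_edge[OF G E(5)] Gnd_edge[OF G E(6)] by auto
  define G1 where "G1 = sw G a1 p z1 y"
  have s1: "triangle_switch n d G G1 \<and> G1 \<in> Gnd n d"
    unfolding G1_def
    by (rule tri_step[where h=z2 and u=p and v=y])
       (use G dist V Vx E N Ec Nc in \<open>auto simp:  mem_sw doubleton_eq_iff\<close>)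
  define G2 where "G2 = sw G1 a3 a4 y p"
  have s2: "triangle_switch n d G1 G2 \<and> G2 \<in> Gnd n d"
    unfolding G2_def
    by (rule tri_step[where h=z2 and u=p and v=y])
       (use s1 dist V Vx E N Ec Nc in \<open>auto simp: G1_def mem_sw doubleton_eq_iff\<close>)
  define G3 where "G3 = sw G2 a1 a2 p a4"
  have s3: "triangle_switch n d G2 G3 \<and> G3 \<in> Gnd n d"
    unfolding G3_def
    by (rule tri_step[where h=z1 and u=a1 and v=p])
       (use s2 dist V Vx E N Ec Nc in \<open>auto simp: G2_def G1_def mem_sw doubleton_eq_iff\<close>)
  define G4 where "G4 = sw G3 a1 z1 a3 y"
  have s4: "triangle_switch n d G3 G4 \<and> G4 \<in> Gnd n d"
    unfolding G4_def
    by (rule tri_step[where h=p and u=a1 and v=z1])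
       (use s3 dist V Vx E N Ec Nc in \<open>auto simp: G3_def G2_def G1_def mem_sw doubleton_eq_iff\<close>)
  have fin: "G4 = (G - {{a1,a2},{a3,a4}}) \<union> {{a1,a3},{a2,a4}}"
  proof (rule set_eqI)
    fix e
    show "e \<in> G4 \<longleftrightarrow> e \<in> (G - {{a1,a2},{a3,a4}}) \<union> {{a1,a3},{a2,a4}}"
    proof (cases "e \<in> {{a1,p},{p,a1},{z1,y},{y,z1},{a1,z1},{z1,a1},{p,y},{y,p},{a3,a4},{a4,a3},{a3,y},{y,a3},{a4,p},{p,a4},{a1,a2},{a2,a1},{a2,a4},{a4,a2},{a1,a3},{a3,a1}}")
      case True
      then show ?thesis unfolding G4_def G3_def G2_def G1_def
        using dist E N Ec Nc by (elim insertE emptyE) (auto simp: mem_sw doubleton_eq_iff)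
    next
      case False
      then show ?thesis unfolding G4_def G3_def G2_def G1_def by (simp add: mem_sw)
    qed
  qed
  show ?thesis
    using path_cons[OF conjunct1[OF s1] path_cons[OF conjunct1[OF s2] path_cons[OF conjunct1[OF s3] path_cons[OF conjunct1[OF s4] path0[OF conjunct2[OF s4]]]]]] fin
    by (simp add: numeral_eq_Suc)
qed

lemma Q_a2:
  fixes G :: graph
  assumes G: "G \<in> Gnd n d"
    and dist: "distinct [a1,a2,a3,a4,p,z1,z2,y]"
    and V: "{a1,a2,a3,a4} \<subseteq> {1..n}"
    and E: "{a1,a2} \<in> G" "{a3,a4} \<in> G" "{a1,p} \<in> G" "{p,z1} \<in> G" "{p,z2} \<in> G" "{y,z1} \<in> G" "{y,z2} \<in> G"
    and N: "{a1,a3} \<notin> G" "{a2,a4} \<notin> G" "{a1,z1} \<notin> G" "{p,y} \<notin> G" "{a4,p} \<notin> G" "{a2,y} \<notin> G"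
  shows "tri_sim_path n d 4 G ((G - {{a1,a2},{a3,a4}}) \<union> {{a1,a3},{a2,a4}})"
proof -
  have Ec: "{a2,a1} \<in> G" "{a4,a3} \<in> G" "{p,a1} \<in> G" "{z1,p} \<in> G" "{z2,p} \<in> G" "{z1,y} \<in> G" "{z2,y} \<in> G"
    using E by (simp_all add: insert_commute)
  have Nc: "{a3,a1} \<notin> G" "{a4,a2} \<notin> G" "{z1,a1} \<notin> G" "{y,p} \<notin> G" "{p,a4} \<notin> G" "{y,a2} \<notin> G"
    using N by (simp_all add: insert_commute)
  have Vx: "p \<in> {1..n}" "z1 \<in> {1..n}" "z2 \<in> {1..n}" "y \<in> {1..n}"
    using Gnd_edge[OF G E(3)] Gnd_edge[OF G E(4)] Gnd_edge[OF G E(5)] Gnd_edge[OF G E(6)] by auto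
  define G1 where "G1 = sw G a1 a2 z1 y"
  have s1: "triangle_switch n d G G1 \<and> G1 \<in> Gnd n d"
    unfolding G1_def
    by (rule tri_step[where h=p and u=a1 and v=z1])
       (use G dist V Vx E N Ec Nc in \<open>auto simp:  mem_sw doubleton_eq_iff\<close>)
  define G2 where "G2 = sw G1 a1 p a3 a4"
  have s2: "triangle_switch n d G1 G2 \<and> G2 \<in> Gnd n d"
    unfolding G2_def
    by (rule tri_step[where h=z1 and u=a1 and v=p])
       (use s1 dist V Vx E N Ec Nc in \<open>auto simp: G1_def mem_sw doubleton_eq_iff\<close>)
  define G3 where "G3 = sw G2 a2 y a4 p"
  have s3: "triangle_switch n d G2 G3 \<and> G3 \<in> Gnd n d"
    unfolding G3_def
    by (rule tri_step[where h=z2 and u=y and v=p])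
       (use s2 dist V Vx E N Ec Nc in \<open>auto simp: G2_def G1_def mem_sw doubleton_eq_iff\<close>)
  define G4 where "G4 = sw G3 a1 z1 p y"
  have s4: "triangle_switch n d G3 G4 \<and> G4 \<in> Gnd n d"
    unfolding G4_def
    by (rule tri_step[where h=z2 and u=p and v=y])
       (use s3 dist V Vx E N Ec Nc in \<open>auto simp: G3_def G2_def G1_def mem_sw doubleton_eq_iff\<close>)
  have fin: "G4 = (G - {{a1,a2},{a3,a4}}) \<union> {{a1,a3},{a2,a4}}"
  proof (rule set_eqI)
    fix e
    show "e \<in> G4 \<longleftrightarrow> e \<in> (G - {{a1,a2},{a3,a4}}) \<union> {{a1,a3},{a2,a4}}"
    proof (cases "e \<in> {{a1,a2},{a2,a1},{z1,y},{y,z1},{a1,z1},{z1,a1},{a2,y},{y,a2},{a1,p},{p,a1},{a3,a4},{a4,a3},{a1,a3},{a3,a1},{p,a4},{a4,p},{a2,a4},{a4,a2},{y,p},{p,y}}")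
      case True
      then show ?thesis unfolding G4_def G3_def G2_def G1_def
        using dist E N Ec Nc by (elim insertE emptyE) (auto simp: mem_sw doubleton_eq_iff)
    next
      case False
      then show ?thesis unfolding G4_def G3_def G2_def G1_def by (simp add: mem_sw)
    qed
  qed
  show ?thesis
    using path_cons[OF conjunct1[OF s1] path_cons[OF conjunct1[OF s2] path_cons[OF conjunct1[OF s3] path_cons[OF conjunct1[OF s4] path0[OF conjunct2[OF s4]]]]]] fin
    by (simp add: numeral_eq_Suc)
qed



theorem lemma3:
  fixes n :: nat and d :: "nat \<Rightarrow> nat" and G H :: graph and a1 a2 a3 a4 :: nat
  assumes "graphical n d"
    and "\<forall>i\<in>{1..n}. d i \<ge> 3"
    and "G \<in> Gnd n d"
    and "distinct [a1,a2,a3,a4]" and "{a1,a2,a3,a4} \<subseteq> {1..n}"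
    and "{a1,a2} \<in> G" and "{a3,a4} \<in> G"
    and "{a1,a3} \<notin> G" and "{a2,a4} \<notin> G"
    and "H = (G - {{a1,a2},{a3,a4}}) \<union> {{a1,a3},{a2,a4}}"
    and "{a1,a4} \<notin> G" and "{a2,a3} \<notin> G"
    and "\<forall>x\<in>{a1,a2,a3,a4}. \<forall>y\<in>{a1,a2,a3,a4}. x \<noteq> y \<longrightarrow>
            \<not> (\<exists>w. {x,w} \<in> G \<and> {y,w} \<in> G)"
    and "\<forall>a\<in>{a1,a2,a3,a4}. \<forall>u w. u \<notin> {a1,a2,a3,a4} \<and> w \<notin> {a1,a2,a3,a4} \<longrightarrow>
            \<not> ({a,u} \<in> G \<and> {a,w} \<in> G \<and> {u,w} \<in> G)"
  shows "\<exists>\<kappa>\<le>5. tri_sim_path n d \<kappa> G H"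
proof -
  note G = assms(3)
  have dist4: "distinct [a1,a2,a3,a4]" by fact
  have V: "{a1,a2,a3,a4} \<subseteq> {1..n}" by fact
  have NC: "\<And>u v w. u \<in> {a1,a2,a3,a4} \<Longrightarrow> v \<in> {a1,a2,a3,a4} \<Longrightarrow> u \<noteq> v \<Longrightarrow> {u,w} \<in> G \<Longrightarrow> {v,w} \<notin> G"
    using assms(13) by blast
  have NT: "\<And>a u w. a \<in> {a1,a2,a3,a4} \<Longrightarrow> u \<notin> {a1,a2,a3,a4} \<Longrightarrow> w \<notin> {a1,a2,a3,a4} \<Longrightarrow>
      {a,u} \<in> G \<Longrightarrow> {a,w} \<in> G \<Longrightarrow> {u,w} \<notin> G"
    using assms(14) by blast
  have ED: "\<And>u v. {u,v} \<in> G \<Longrightarrow> u \<noteq> v \<and> u \<in> {1..n} \<and> v \<in> {1..n}"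
    using Gnd_edge[OF G] by blast
  have DEG: "\<And>v b c. v \<in> {1..n} \<Longrightarrow> \<exists>w. {v,w} \<in> G \<and> w \<noteq> b \<and> w \<noteq> c"
    using deg3_nbr[OF G] assms(2) by blast
  have nbrX: "w \<notin> {a1,a2,a3,a4}" if t: "{a1,t} \<in> G" and tw: "{t,w} \<in> G" and w1: "w \<noteq> a1" for t w
  proof
    assume "w \<in> {a1,a2,a3,a4}"
    then consider "w = a2" | "w = a3" | "w = a4" using w1 by blast
    then show False
    proof cases
      case 1
      then have "{a2,t} \<in> G" using tw by (simp add: insert_commute)
      then show False using NC[of a1 a2 t] t dist4 by auto
    next
      case 2
      then have "{a3,t} \<in> G" using tw by (simp add: insert_commute)
      then show False using NC[of a1 a3 t] t dist4 by auto
    next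
      case 3
      then have "{a4,t} \<in> G" using tw by (simp add: insert_commute)
      then show False using NC[of a1 a4 t] t dist4 by auto
    qed
  qed
  have inX: "t \<notin> {a1,a2,a3,a4}" if t: "{a1,t} \<in> G" "t \<noteq> a2" for t
    using t ED[OF t(1)] assms(8,11) by auto
  have a1n: "a1 \<in> {1..n}" using V by simp
  obtain x where x: "{a1,x} \<in> G" "x \<noteq> a2" using DEG[OF a1n, of a2 a2] by blast
  obtain p where p: "{a1,p} \<in> G" "p \<noteq> a2" "p \<noteq> x" using DEG[OF a1n, of a2 x] by blast
  have xD: "x \<notin> {a1,a2,a3,a4}" using inX x by blast
  have pD: "p \<notin> {a1,a2,a3,a4}" using inX p by blast
  have xn: "x \<in> {1..n}" using ED[OF x(1)] by blast
  have pn: "p \<in> {1..n}" using ED[OF p(1)] by blast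
  have xp: "{x,p} \<notin> G" using NT[of a1 x p] xD pD x p by blast
  have px: "{p,x} \<notin> G" using xp by (simp add: insert_commute)
  have a4x: "{a4,x} \<notin> G" using NC[of a1 a4 x] x dist4 by auto
  have a4p: "{a4,p} \<notin> G" using NC[of a1 a4 p] p dist4 by auto
  have a3x: "{a3,x} \<notin> G" using NC[of a1 a3 x] x dist4 by auto
  have a1z: "{a1,z} \<notin> G" if "{p,z} \<in> G" "z \<notin> {a1,a2,a3,a4}" for z
    using NT[of a1 p z] that pD p by blast
  obtain z1 where z1: "{p,z1} \<in> G" "z1 \<noteq> a1" using DEG[OF pn, of a1 a1] by blast
  obtain z2 where z2: "{p,z2} \<in> G" "z2 \<noteq> a1" "z2 \<noteq> z1" using DEG[OF pn, of a1 z1] by blast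
  have z1D: "z1 \<notin> {a1,a2,a3,a4}" using nbrX[OF p(1) z1(1) z1(2)] .
  have z2D: "z2 \<notin> {a1,a2,a3,a4}" using nbrX[OF p(1) z2(1) z2(2)] .
  have HH: "H = (G - {{a1,a2},{a3,a4}}) \<union> {{a1,a3},{a2,a4}}" by fact
  have "tri_sim_path n d 4 G H"
  proof (cases "\<forall>y. {x,y} \<in> G \<and> y \<noteq> a1 \<longrightarrow> {p,y} \<in> G")
    case True
    obtain y1 where y1: "{x,y1} \<in> G" "y1 \<noteq> a1" using DEG[OF xn, of a1 a1] by blast
    obtain y2 where y2: "{x,y2} \<in> G" "y2 \<noteq> a1" "y2 \<noteq> y1" using DEG[OF xn, of a1 y1] by blast
    have py1: "{p,y1} \<in> G" and py2: "{p,y2} \<in> G" using True y1 y2 by auto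
    have y1D: "y1 \<notin> {a1,a2,a3,a4}" using nbrX[OF x(1) y1(1) y1(2)] .
    have y2D: "y2 \<notin> {a1,a2,a3,a4}" using nbrX[OF x(1) y2(1) y2(2)] .
    have "distinct [a1,a2,a3,a4,p,y1,y2,x]"
      using dist4 xD pD y1D y2D p y2 ED[OF py1] ED[OF py2] ED[OF y1(1)] ED[OF y2(1)] by auto
    then show ?thesis unfolding HH
      using Q_a3[OF G _ V assms(6,7) p(1) py1 py2 y1(1) y2(1) assms(8,9) a1z[OF py1 y1D] px a4p a3x]
      by (simp add: insert_commute)
  next
    case False
    then obtain y where y: "{x,y} \<in> G" "y \<noteq> a1" "{p,y} \<notin> G" by blast
    have yD: "y \<notin> {a1,a2,a3,a4}" using nbrX[OF x(1) y(1) y(2)] .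
    have yp: "y \<noteq> p" using y xp by auto
    have yx: "y \<noteq> x" using ED[OF y(1)] by auto
    show ?thesis
    proof (cases "\<exists>z. {p,z} \<in> G \<and> z \<noteq> a1 \<and> {y,z} \<notin> G")
      case True
      then obtain z where z: "{p,z} \<in> G" "z \<noteq> a1" "{y,z} \<notin> G" by blast
      have zD: "z \<notin> {a1,a2,a3,a4}" using nbrX[OF p(1) z(1) z(2)] .
      have "z \<noteq> x" using z px by auto
      moreover have "z \<noteq> y" using z y by auto
      moreover have "z \<noteq> p" using ED[OF z(1)] by auto
      ultimately have "distinct [a1,a2,a3,a4,x,p,y,z]"
        using dist4 xD pD yD zD yp yx p by auto
      then show ?thesis unfolding HH
        using P_gen[OF G _ V assms(6,7) x(1) p(1) y(1) z(1) assms(8,9) xp z(3) a4x] by blast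
    next
      case False
      then have yz1: "{y,z1} \<in> G" and yz2: "{y,z2} \<in> G" using z1 z2 by auto
      have dist8: "distinct [a1,a2,a3,a4,p,z1,z2,y]"
        using dist4 pD z1D z2D yD yp z2 ED[OF z1(1)] ED[OF z2(1)] ED[OF yz1] ED[OF yz2] by auto
      have py: "{p,y} \<notin> G" by (rule y(3))
      show ?thesis
      proof (cases "{a3,y} \<in> G")
        case False
        then show ?thesis unfolding HH
          using Q_a3[OF G dist8 V assms(6,7) p(1) z1(1) z2(1) yz1 yz2 assms(8,9) a1z[OF z1(1) z1D] py a4p]
          by blast
      next
        case True
        have "{a2,y} \<notin> G" using NC[of a3 a2 y] True dist4 by auto
        then show ?thesis unfolding HH
          using Q_a2[OF G dist8 V assms(6,7) p(1) z1(1) z2(1) yz1 yz2 assms(8,9) a1z[OF z1(1) z1D] py a4p]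
          by blast
      qed
    qed
  qed
  then show ?thesis by (intro exI[of _ 4]) simp
qed

end
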